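(* For $i\in\{1,2\}$ let $\Sigma_{i,\mathbb{T}}$ be the linear time-varying system $x_i(t+1)=A_i(t)x_i(t)+B_i(t)u_i(t)$, $y_i(t)=C_i(t)x_i(t)+D_i(t)u_i(t)$, $t\in\mathbb{T}=\{0,\dots,T-1\}$, with $u_i(t)\in\mathbb{R}^{n_u}$, $y_i(t)\in\mathbb{R}^{n_y}$ and initial state $x_i(0)=x_{i0}$, and let $\mathcal{B}_{i,x_{i0}}$ be its admissible behavior. For each $i$, let test inputs $\mathbf{u}_i^0,\dots,\mathbf{u}_i^{n_uT}\in\mathbb{R}^{n_uT}$ be applied from $x_{i0}$ with outputs $\mathbf{y}_i^k$, where $\mathbf{u}_i^0=0$ and $\operatorname{rank}[\mathbf{u}_i^1,\dots,\mathbf{u}_i^{n_uT}]=n_uT$; let $w_i^k=\operatorname{col}(\mathbf{u}_i^k,\mathbf{y}_i^k)$, $W_i=[w_i^1-w_i^0,\dots,w_i^{n_uT}-w_i^0]$, and let $H_i\in\mathbb{R}^{n_wT\times n_uT}$ be a matrix whose columns form an orthonormal basis of $\operatorname{span}(W_i)$. Then $\mathcal{B}_{1,x_{10}}$ and $\mathcal{B}_{2,x_{20}}$ are similar (i.e. $\mathcal{B}_{1,x_{10}}\cap\mathcal{B}_{2,x_{20}}\neq\emptyset$) if and only if there exist $l_1,l_2\in\mathbb{R}^{n_uT}$ such that $[H_1\ \ H_2]\begin{bmatrix}l_1\\ l_2\end{bmatrix}=w_2^0-w_1^0$. Moreover, the common behavior is $\mathcal{B}_{1,x_{10}}\cap\mathcal{B}_{2,x_{20}}=\{H_1l_1+w_1^0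 : (l_1,l_2)\text{ solves this equation}\}$.
   Context: $n_w=n_u+n_y$. Supervectors over $\mathbb{T}$: $\mathbf{u}_i=[u_i(0)^{\rm T},\dots,u_i(T-1)^{\rm T}]^{\rm T}$, likewise $\mathbf{y}_i,\mathbf{x}_i$. The admissible behavior $\mathcal{B}_{i,x_{i0}}\subseteq\mathbb{R}^{n_wT}$ is the set of all $\operatorname{col}(\mathbf{u}_i,\mathbf{y}_i)$ for which there exists a state supervector $\mathbf{x}_i$ with $x_i(0)=x_{i0}$ such that $(\mathbf{u}_i,\mathbf{y}_i,\mathbf{x}_i)$ satisfies the system equations. $\mathbf{y}_i^k$ denotes the output supervector of $\Sigma_{i,\mathbb{T}}$ under input $\mathbf{u}_i^k$ from $x_i(0)=x_{i0}$. Two admissible behaviors are called similar if their intersection is nonempty. *)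

theory Defs
  imports "Jordan_Normal_Form.DL_Rank"
begin

text \<open>Block t (of size n) of a supervector v = [v(0); ...; v(T-1)].\<close>
definition blk :: "nat \<Rightarrow> real vec \<Rightarrow> nat \<Rightarrow> real vec" where
  "blk n v t = vec n (\<lambda>j. v $ (t * n + j))"

definition behavior ::
  "nat \<Rightarrow> nat \<Rightarrow> nat \<Rightarrow> nat \<Rightarrow> (nat \<Rightarrow> real mat) \<Rightarrow> (nat \<Rightarrow> real mat) \<Rightarrow>
   (nat \<Rightarrow> real mat) \<Rightarrow> (nat \<Rightarrow> real mat) \<Rightarrow> real vec \<Rightarrow> real vec set" where
  "behavior nx nu ny T A B C D x0 =
     {u @\<^sub>v y | u y. u \<in> carrier_vec (nu * T) \<and> y \<in> carrier_vec (ny * T) \<and>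
        (\<exists>x :: nat \<Rightarrow> real vec. x 0 = x0 \<and>
           (\<forall>t<T. x t \<in> carrier_vec nx \<and>
                  x (Suc t) = A t *\<^sub>v x t + B t *\<^sub>v blk nu u t \<and>
                  blk ny y t = C t *\<^sub>v x t + D t *\<^sub>v blk nu u t))}"

definition well_dim_sys ::
  "nat \<Rightarrow> nat \<Rightarrow> nat \<Rightarrow> nat \<Rightarrow> (nat \<Rightarrow> real mat) \<Rightarrow> (nat \<Rightarrow> real mat) \<Rightarrow>
   (nat \<Rightarrow> real mat) \<Rightarrow> (nat \<Rightarrow> real mat) \<Rightarrow> real vec \<Rightarrow> bool" where
  "well_dim_sys nx nu ny T A B C D x0 \<longleftrightarrow> x0 \<in> carrier_vec nx \<and>
     (\<forall>t<T. A t \<in> carrier_mat nx nx \<and> B t \<in> carrier_mat nx nu \<and>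
            C t \<in> carrier_mat ny nx \<and> D t \<in> carrier_mat ny nu)"

definition diff_mat :: "nat \<Rightarrow> nat \<Rightarrow> (nat \<Rightarrow> real vec) \<Rightarrow> real mat" where
  "diff_mat m N w = mat_of_cols m (map (\<lambda>k. w k - w 0) [1..<N+1])"

definition onb_of_span :: "nat \<Rightarrow> real mat \<Rightarrow> real mat \<Rightarrow> bool" where
  "onb_of_span m H W \<longleftrightarrow>
     (\<forall>j<dim_col H. \<forall>k<dim_col H. col H j \<bullet> col H k = (if j = k then 1 else 0)) \<and>
     LinearCombinations.module.span class_ring (module_vec TYPE(real) m) (set (cols H)) = LinearCombinations.module.span class_ring (module_vec TYPE(real) m) (set (cols W))"

end

theory Submission
  imports Defs
begin

lemma idx_lt: "t < T \<Longrightarrow> j < (n::nat) \<Longrightarrow> t * n + j < n * T"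
proof -
  assume a: "t < T" "j < n"
  have "t * n + j < t * n + n" using a by simp
  also have "\<dots> = Suc t * n" by simp
  also have "\<dots> \<le> T * n" using a by (intro mult_le_mono1) simp
  finally show ?thesis by (simp add: mult.commute)
qed

lemma blk_comb:
  assumes "u \<in> carrier_vec (n * T)" "v \<in> carrier_vec (n * T)" "t < T"
  shows "blk n (\<alpha> \<cdot>\<^sub>v u + \<beta> \<cdot>\<^sub>v v) t = \<alpha> \<cdot>\<^sub>v blk n u t + \<beta> \<cdot>\<^sub>v blk n v t"
  using assms idx_lt[OF assms(3)] unfolding blk_def by (intro eq_vecI) auto

lemma beh_comb:
  assumes dims: "\<forall>t<T. A t \<in> carrier_mat nx nx \<and> B t \<in> carrier_mat nx nu \<and>
            C t \<in> carrier_mat ny nx \<and> D t \<in> carrier_mat ny nu"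
    and a: "a \<in> behavior nx nu ny T A B C D xa"
    and b: "b \<in> behavior nx nu ny T A B C D xb"
  shows "\<alpha> \<cdot>\<^sub>v a + \<beta> \<cdot>\<^sub>v b \<in> behavior nx nu ny T A B C D (\<alpha> \<cdot>\<^sub>v xa + \<beta> \<cdot>\<^sub>v xb)"
proof -
  obtain ua ya x1 where ha: "a = ua @\<^sub>v ya" "ua \<in> carrier_vec (nu * T)" "ya \<in> carrier_vec (ny * T)"
    "x1 0 = xa" "\<forall>t<T. x1 t \<in> carrier_vec nx \<and>
                  x1 (Suc t) = A t *\<^sub>v x1 t + B t *\<^sub>v blk nu ua t \<and>
                  blk ny ya t = C t *\<^sub>v x1 t + D t *\<^sub>v blk nu ua t"
    using a unfolding behavior_def by blast
  obtain ub yb x2 where hb: "b = ub @\<^sub>v yb" "ub \<in> carrier_vec (nu * T)" "yb \<in> carrier_vec (ny * T)"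
    "x2 0 = xb" "\<forall>t<T. x2 t \<in> carrier_vec nx \<and>
                  x2 (Suc t) = A t *\<^sub>v x2 t + B t *\<^sub>v blk nu ub t \<and>
                  blk ny yb t = C t *\<^sub>v x2 t + D t *\<^sub>v blk nu ub t"
    using b unfolding behavior_def by blast
  define u where "u = \<alpha> \<cdot>\<^sub>v ua + \<beta> \<cdot>\<^sub>v ub"
  define y where "y = \<alpha> \<cdot>\<^sub>v ya + \<beta> \<cdot>\<^sub>v yb"
  define x where "x = (\<lambda>t. \<alpha> \<cdot>\<^sub>v x1 t + \<beta> \<cdot>\<^sub>v x2 t)"
  have eq: "\<alpha> \<cdot>\<^sub>v a + \<beta> \<cdot>\<^sub>v b = u @\<^sub>v y"
    unfolding u_def y_def ha hb using ha(2,3) hb(2,3)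
    by (intro eq_vecI) auto
  have lin: "M *\<^sub>v (\<alpha> \<cdot>\<^sub>v p + \<beta> \<cdot>\<^sub>v q) = \<alpha> \<cdot>\<^sub>v (M *\<^sub>v p) + \<beta> \<cdot>\<^sub>v (M *\<^sub>v q)"
    if "M \<in> carrier_mat r c" "p \<in> carrier_vec c" "q \<in> carrier_vec c" for M :: "real mat" and r c p q
    using that by (simp add: mult_add_distrib_mat_vec mult_mat_vec)
  have rearr: "\<alpha> \<cdot>\<^sub>v (p1 + q1) + \<beta> \<cdot>\<^sub>v (p2 + q2) = (\<alpha> \<cdot>\<^sub>v p1 + \<beta> \<cdot>\<^sub>v p2) + (\<alpha> \<cdot>\<^sub>v q1 + \<beta> \<cdot>\<^sub>v q2)"
    if "p1 \<in> carrier_vec r" "p2 \<in> carrier_vec r" "q1 \<in> carrier_vec r" "q2 \<in> carrier_vec r"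
    for p1 p2 q1 q2 :: "real vec" and r
    using that by (intro eq_vecI) (auto simp: algebra_simps)
  have "\<forall>t<T. x t \<in> carrier_vec nx \<and>
                  x (Suc t) = A t *\<^sub>v x t + B t *\<^sub>v blk nu u t \<and>
                  blk ny y t = C t *\<^sub>v x t + D t *\<^sub>v blk nu u t"
  proof (intro allI impI conjI)
    fix t assume t: "t < T"
    have c1: "x1 t \<in> carrier_vec nx" "x2 t \<in> carrier_vec nx" using ha(5) hb(5) t by auto
    have cb: "blk nu ua t \<in> carrier_vec nu" "blk nu ub t \<in> carrier_vec nu" unfolding blk_def by auto
    have m: "A t \<in> carrier_mat nx nx" "B t \<in> carrier_mat nx nu" "C t \<in> carrier_mat ny nx" "D t \<in> carrier_mat ny nu"
      using dims t by auto
    show "x t \<in> carrier_vec nx" unfolding x_def using c1 by auto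
    have bu: "blk nu u t = \<alpha> \<cdot>\<^sub>v blk nu ua t + \<beta> \<cdot>\<^sub>v blk nu ub t"
      unfolding u_def using blk_comb ha(2) hb(2) t by blast
    have by': "blk ny y t = \<alpha> \<cdot>\<^sub>v blk ny ya t + \<beta> \<cdot>\<^sub>v blk ny yb t"
      unfolding y_def using blk_comb ha(3) hb(3) t by blast
    show "x (Suc t) = A t *\<^sub>v x t + B t *\<^sub>v blk nu u t"
      unfolding x_def bu using ha(5) hb(5) t c1 cb m
      by (simp add: lin[OF m(1)] lin[OF m(2)] rearr[of _ nx])
    show "blk ny y t = C t *\<^sub>v x t + D t *\<^sub>v blk nu u t"
      unfolding x_def bu by' using ha(5) hb(5) t c1 cb m
      by (simp add: lin[OF m(3)] lin[OF m(4)] rearr[of _ ny])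
  qed
  moreover have "x 0 = \<alpha> \<cdot>\<^sub>v xa + \<beta> \<cdot>\<^sub>v xb" unfolding x_def ha(4) hb(4) ..
  moreover have "u \<in> carrier_vec (nu * T)" "y \<in> carrier_vec (ny * T)"
    unfolding u_def y_def using ha hb by auto
  ultimately show ?thesis unfolding eq behavior_def by blast
qed

lemma beh_unique:
  assumes a: "u @\<^sub>v y \<in> behavior nx nu ny T A B C D x0"
    and b: "u @\<^sub>v y' \<in> behavior nx nu ny T A B C D x0"
    and u: "u \<in> carrier_vec (nu * T)"
  shows "y = y'"
proof -
  obtain ua ya x1 where ha: "u @\<^sub>v y = ua @\<^sub>v ya" "ua \<in> carrier_vec (nu * T)" "ya \<in> carrier_vec (ny * T)"
    "x1 0 = x0" "\<forall>t<T. x1 t \<in> carrier_vec nx \<and>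
                  x1 (Suc t) = A t *\<^sub>v x1 t + B t *\<^sub>v blk nu ua t \<and>
                  blk ny ya t = C t *\<^sub>v x1 t + D t *\<^sub>v blk nu ua t"
    using a unfolding behavior_def by blast
  obtain ub yb x2 where hb: "u @\<^sub>v y' = ub @\<^sub>v yb" "ub \<in> carrier_vec (nu * T)" "yb \<in> carrier_vec (ny * T)"
    "x2 0 = x0" "\<forall>t<T. x2 t \<in> carrier_vec nx \<and>
                  x2 (Suc t) = A t *\<^sub>v x2 t + B t *\<^sub>v blk nu ub t \<and>
                  blk ny yb t = C t *\<^sub>v x2 t + D t *\<^sub>v blk nu ub t"
    using b unfolding behavior_def by blast
  have e1: "ua = u" "ya = y" using ha(1) ha(2) u append_vec_eq by metis+
  have e2: "ub = u" "yb = y'" using hb(1) hb(2) u append_vec_eq by metis+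
  have xs: "t \<le> T \<Longrightarrow> x1 t = x2 t" for t
  proof (induction t)
    case 0 then show ?case using ha(4) hb(4) by simp
  next
    case (Suc t) then show ?case using ha(5) hb(5) e1 e2 by auto
  qed
  have bl: "blk ny y t = blk ny y' t" if "t < T" for t
    using ha(5) hb(5) e1 e2 xs[of t] that by auto
  show ?thesis
  proof (rule eq_vecI)
    show "dim_vec y = dim_vec y'" using ha(3) hb(3) e1 e2 by auto
    fix i assume i: "i < dim_vec y'"
    then have iT: "i < ny * T" using hb(3) e2 by auto
    then have "ny > 0" by (cases ny) auto
    define t where "t = i div ny"
    define j where "j = i mod ny"
    have ij: "i = t * ny + j" unfolding t_def j_def by simp
    have j: "j < ny" unfolding j_def using \<open>ny > 0\<close> by simp
    have t: "t < T" using iT unfolding t_def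
      by (metis less_mult_imp_div_less mult.commute)
    have "blk ny y t $ j = blk ny y' t $ j" using bl[OF t] by simp
    then show "y $ i = y' $ i" unfolding blk_def using j ij by simp
  qed
qed

lemma full_rank_surj:
  assumes M: "M \<in> carrier_mat n n" and r: "vec_space.rank n M = n"
    and v: "v \<in> carrier_vec n"
  shows "\<exists>c \<in> carrier_vec n. M *\<^sub>v c = (v :: real vec)"
proof -
  have "det M \<noteq> 0" using vec_space.det_rank_iff[OF M] r by simp
  from det_non_zero_imp_unit[OF M this, of undefined]
  obtain Mi where Mi: "Mi \<in> carrier_mat n n" "M * Mi = 1\<^sub>m n"
    unfolding Units_def ring_mat_def by auto
  have "M *\<^sub>v (Mi *\<^sub>v v) = v" using M Mi v
    by (metis assoc_mult_mat_vec one_mult_mat_vec)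
  moreover have "Mi *\<^sub>v v \<in> carrier_vec n" using Mi v by auto
  ultimately show ?thesis by blast
qed

lemma beh_char:
  fixes u y :: "nat \<Rightarrow> real vec"
  assumes sys: "well_dim_sys nx nu ny T A B C D x0"
    and u_dim: "\<forall>k\<le>nu * T. u k \<in> carrier_vec (nu * T)"
    and y_dim: "\<forall>k\<le>nu * T. y k \<in> carrier_vec (ny * T)"
    and out: "\<forall>k\<le>nu * T. u k @\<^sub>v y k \<in> behavior nx nu ny T A B C D x0"
    and u0: "u 0 = 0\<^sub>v (nu * T)"
    and rank: "vec_space.rank (nu * T) (mat_of_cols (nu * T) (map u [1..<nu * T + 1])) = nu * T"
  shows "behavior nx nu ny T A B C D x0 =
     {diff_mat ((nu + ny) * T) (nu * T) (\<lambda>k. u k @\<^sub>v y k) *\<^sub>v c + (u 0 @\<^sub>v y 0) | c. c \<in> carrier_vec (nu * T)}"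
proof -
  define N where "N = nu * T"
  define m where "m = (nu + ny) * T"
  have mN: "m = N + ny * T" unfolding m_def N_def by (simp add: algebra_simps)
  define w where "w = (\<lambda>k. u k @\<^sub>v y k)"
  define Bh where "Bh = behavior nx nu ny T A B C D x0"
  define B0 where "B0 = behavior nx nu ny T A B C D (0\<^sub>v nx)"
  define W where "W = diff_mat m N w"
  define M where "M = mat_of_cols N (map u [1..<N + 1])"
  have dims: "\<forall>t<T. A t \<in> carrier_mat nx nx \<and> B t \<in> carrier_mat nx nu \<and>
            C t \<in> carrier_mat ny nx \<and> D t \<in> carrier_mat ny nu" and x0: "x0 \<in> carrier_vec nx"
    using sys unfolding well_dim_sys_def by auto
  have wc: "w k \<in> carrier_vec m" if "k \<le> N" for k
    unfolding w_def mN using u_dim y_dim that N_def by auto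
  have wB: "w k \<in> Bh" if "k \<le> N" for k using out that unfolding w_def Bh_def N_def by auto
  have B0c: "B0 \<subseteq> carrier_vec m"
    unfolding B0_def behavior_def mN N_def by auto
  have diffB: "a - b \<in> B0" if "a \<in> Bh" "b \<in> Bh" "a \<in> carrier_vec m" "b \<in> carrier_vec m" for a b
  proof -
    have "1 \<cdot>\<^sub>v a + (-1) \<cdot>\<^sub>v b \<in> behavior nx nu ny T A B C D (1 \<cdot>\<^sub>v x0 + (-1) \<cdot>\<^sub>v x0)"
      using beh_comb[OF dims] that unfolding Bh_def by blast
    moreover have "1 \<cdot>\<^sub>v a + (-1) \<cdot>\<^sub>v b = a - b" using that by (intro eq_vecI) auto
    moreover have "1 \<cdot>\<^sub>v x0 + (-1) \<cdot>\<^sub>v x0 = 0\<^sub>v nx" using x0 by (intro eq_vecI) auto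
    ultimately show ?thesis unfolding B0_def by simp
  qed
  have addB: "a + b \<in> Bh" if "a \<in> Bh" "b \<in> B0" "a \<in> carrier_vec m" "b \<in> carrier_vec m" for a b
  proof -
    have "1 \<cdot>\<^sub>v a + 1 \<cdot>\<^sub>v b \<in> behavior nx nu ny T A B C D (1 \<cdot>\<^sub>v x0 + 1 \<cdot>\<^sub>v 0\<^sub>v nx)"
      using beh_comb[OF dims] that unfolding Bh_def B0_def by blast
    moreover have "1 \<cdot>\<^sub>v a + 1 \<cdot>\<^sub>v b = a + b" using that by (intro eq_vecI) auto
    moreover have "1 \<cdot>\<^sub>v x0 + 1 \<cdot>\<^sub>v 0\<^sub>v nx = x0" using x0 by (intro eq_vecI) auto
    ultimately show ?thesis unfolding Bh_def by simp
  qed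
  have sub: "submodule class_ring B0 (module_vec TYPE(real) m)"
  proof (unfold submodule_def, intro conjI allI impI)
    show "module class_ring (module_vec TYPE(real) m)" by (rule vec_module)
    show "B0 \<subseteq> carrier (module_vec TYPE(real) m)" using B0c by (simp add: module_vec_simps)
    fix v w' assume v: "v \<in> B0" and w': "w' \<in> B0"
    have "1 \<cdot>\<^sub>v v + 1 \<cdot>\<^sub>v w' \<in> behavior nx nu ny T A B C D (1 \<cdot>\<^sub>v 0\<^sub>v nx + 1 \<cdot>\<^sub>v 0\<^sub>v nx)"
      using beh_comb[OF dims] v w' unfolding B0_def by blast
    moreover have "1 \<cdot>\<^sub>v v + 1 \<cdot>\<^sub>v w' = v + w'" using v w' B0c by (intro eq_vecI) auto
    moreover have "1 \<cdot>\<^sub>v 0\<^sub>v nx + 1 \<cdot>\<^sub>v 0\<^sub>v nx = (0\<^sub>v nx :: real vec)" by (intro eq_vecI) auto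
    ultimately show "v \<oplus>\<^bsub>module_vec TYPE(real) m\<^esub> w' \<in> B0" unfolding B0_def by (simp add: module_vec_simps)
  next
    have "w 0 - w 0 \<in> B0" using diffB wB wc by auto
    moreover have "w 0 - w 0 = 0\<^sub>v m" using wc[of 0] by (intro eq_vecI) auto
    ultimately show "\<zero>\<^bsub>module_vec TYPE(real) m\<^esub> \<in> B0" by (simp add: module_vec_simps)
  next
    fix c :: real and v assume v: "v \<in> B0"
    have "c \<cdot>\<^sub>v v + 0 \<cdot>\<^sub>v v \<in> behavior nx nu ny T A B C D (c \<cdot>\<^sub>v 0\<^sub>v nx + 0 \<cdot>\<^sub>v 0\<^sub>v nx)"
      using beh_comb[OF dims] v unfolding B0_def by blast
    moreover have "c \<cdot>\<^sub>v v + 0 \<cdot>\<^sub>v v = c \<cdot>\<^sub>v v" using v B0c by (intro eq_vecI) auto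
    moreover have "c \<cdot>\<^sub>v 0\<^sub>v nx + 0 \<cdot>\<^sub>v 0\<^sub>v nx = (0\<^sub>v nx :: real vec)" by (intro eq_vecI) auto
    ultimately show "c \<odot>\<^bsub>module_vec TYPE(real) m\<^esub> v \<in> B0" unfolding B0_def by (simp add: module_vec_simps)
  qed
  have colsW: "set (cols W) \<subseteq> B0"
  proof -
    have "set (cols W) = set (map (\<lambda>k. w k - w 0) [1..<N+1])"
      unfolding W_def diff_mat_def using wc by (subst cols_mat_of_cols) auto
    also have "\<dots> \<subseteq> B0" using diffB wB wc by auto
    finally show ?thesis .
  qed
  have Wc: "W \<in> carrier_mat m N" unfolding W_def diff_mat_def by auto
  have spanW: "LinearCombinations.module.span class_ring (module_vec TYPE(real) m) (set (cols W)) =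
     {v \<in> carrier_vec m. \<exists>c\<in>carrier_vec N. W *\<^sub>v c = v}"
    using vec_space.col_space_eq[OF Wc] Wc unfolding vec_space.col_space_def by auto
  have spanB0: "LinearCombinations.module.span class_ring (module_vec TYPE(real) m) (set (cols W)) \<subseteq> B0"
    using module.span_is_subset[OF vec_module colsW sub] .
  have WB0: "W *\<^sub>v c \<in> B0" if "c \<in> carrier_vec N" for c
    using spanB0 spanW that Wc by auto
  have Mc: "M \<in> carrier_mat N N" unfolding M_def by auto
  have rowWM: "row W i = row M i" if i: "i < N" for i
  proof (rule eq_vecI)
    show "dim_vec (row W i) = dim_vec (row M i)" using Wc Mc by simp
    fix j assume "j < dim_vec (row M i)"
    then have j: "j < N" using Mc by simp
    have iN: "i < m" using i mN by simp
    have "W $$ (i, j) = (w (j+1) - w 0) $ i"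
      unfolding W_def diff_mat_def using iN j by (simp add: mat_of_cols_index del: upt_Suc)
    also have "\<dots> = u (j+1) $ i"
    proof -
      have jj: "j + 1 \<le> nu * T" "0 \<le> nu * T" using j N_def by auto
      have c1: "u (j+1) \<in> carrier_vec (nu * T)" "y (j+1) \<in> carrier_vec (ny * T)"
        "u 0 \<in> carrier_vec (nu * T)" "y 0 \<in> carrier_vec (ny * T)"
        using u_dim y_dim jj by auto
      have "(w (j+1) - w 0) $ i = w (j+1) $ i - w 0 $ i" using iN wc[of 0] by simp
      also have "w (j+1) $ i = u (j+1) $ i" unfolding w_def using c1 i N_def by simp
      also have "w 0 $ i = 0" unfolding w_def using c1 i N_def u0 by simp
      finally show ?thesis by simp
    qed
    also have "\<dots> = M $$ (i, j)"
      unfolding M_def using i j by (simp add: mat_of_cols_index del: upt_Suc)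
    finally show "row W i $ j = row M i $ j" using i j Wc Mc iN by simp
  qed
  have WMc: "(W *\<^sub>v c) $ i = (M *\<^sub>v c) $ i" if "i < N" for i c
    using rowWM[OF that] that Wc Mc mN by simp
  have B0form: "\<exists>uu yy. v = uu @\<^sub>v yy \<and> uu \<in> carrier_vec N" if "v \<in> B0" for v
    using that unfolding B0_def behavior_def N_def by blast
  have main: "Bh = {W *\<^sub>v c + w 0 | c. c \<in> carrier_vec N}"
  proof (intro equalityI subsetI)
    fix a assume a: "a \<in> {W *\<^sub>v c + w 0 |c. c \<in> carrier_vec N}"
    then obtain c where c: "c \<in> carrier_vec N" "a = W *\<^sub>v c + w 0" by blast
    have "w 0 + W *\<^sub>v c \<in> Bh" using addB[OF wB[of 0] WB0[OF c(1)]] wc[of 0] Wc c by auto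
    moreover have "w 0 + W *\<^sub>v c = a" using c(2) comm_add_vec[OF wc[of 0] mult_mat_vec_carrier[OF Wc c(1)]] by simp
    ultimately show "a \<in> Bh" by simp
  next
    fix a assume a: "a \<in> Bh"
    have ac: "a \<in> carrier_vec m" using a unfolding Bh_def behavior_def mN N_def by auto
    have d: "a - w 0 \<in> B0" using diffB[OF a wB[of 0] ac wc[of 0]] by simp
    obtain ud yd where hd: "a - w 0 = ud @\<^sub>v yd" "ud \<in> carrier_vec N" using B0form[OF d] by blast
    obtain c where c: "c \<in> carrier_vec N" "M *\<^sub>v c = ud"
      using full_rank_surj[OF Mc _ hd(2)] rank unfolding M_def N_def by blast
    have wcB: "W *\<^sub>v c \<in> B0" using WB0[OF c(1)] .
    obtain uw yw where hw: "W *\<^sub>v c = uw @\<^sub>v yw" "uw \<in> carrier_vec N" using B0form[OF wcB] by blast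
    have "uw = ud"
    proof (rule eq_vecI)
      show "dim_vec uw = dim_vec ud" using hw hd by simp
      fix i assume "i < dim_vec ud"
      then have i: "i < N" using hd by simp
      have "uw $ i = (W *\<^sub>v c) $ i" unfolding hw(1) using i hw(2)
        by (metis carrier_vecD index_append_vec(1) trans_less_add1 index_append_vec(2))
      also have "\<dots> = (M *\<^sub>v c) $ i" using WMc[OF i] .
      also have "\<dots> = (a - w 0) $ i" unfolding c(2) hd(1) using i hd(2)
        by (metis carrier_vecD index_append_vec(1) trans_less_add1 index_append_vec(2))
      finally show "uw $ i = ud $ i" unfolding hd(1) using i hd(2)
        by (metis carrier_vecD index_append_vec(1) trans_less_add1 index_append_vec(2))
    qed
    then have "yw = yd" using beh_unique[of ud yw nx nu ny T A B C D "0\<^sub>v nx" yd] wcB d hw hd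
      unfolding B0_def N_def by simp
    then have "W *\<^sub>v c = a - w 0" using hw hd \<open>uw = ud\<close> by simp
    then have "a = W *\<^sub>v c + w 0" using ac wc[of 0] by (intro eq_vecI) (auto simp: mN)
    then show "a \<in> {W *\<^sub>v c + w 0 |c. c \<in> carrier_vec N}" using c by blast
  qed
  then show ?thesis unfolding Bh_def W_def m_def N_def w_def .
qed

lemma beh_H:
  fixes W H :: "real mat"
  assumes Bd: "Bh = {W *\<^sub>v c + w0 | c. c \<in> carrier_vec N}"
    and Wc: "W \<in> carrier_mat m N" and Hc: "H \<in> carrier_mat m N"
    and sp: "LinearCombinations.module.span class_ring (module_vec TYPE(real) m) (set (cols H)) =
             LinearCombinations.module.span class_ring (module_vec TYPE(real) m) (set (cols W))"
  shows "Bh = {H *\<^sub>v l + w0 | l. l \<in> carrier_vec N}"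
proof -
  have sW: "LinearCombinations.module.span class_ring (module_vec TYPE(real) m) (set (cols W)) =
     {v \<in> carrier_vec m. \<exists>c\<in>carrier_vec N. W *\<^sub>v c = v}"
    using vec_space.col_space_eq[OF Wc] Wc unfolding vec_space.col_space_def by auto
  have sH: "LinearCombinations.module.span class_ring (module_vec TYPE(real) m) (set (cols H)) =
     {v \<in> carrier_vec m. \<exists>c\<in>carrier_vec N. H *\<^sub>v c = v}"
    using vec_space.col_space_eq[OF Hc] Hc unfolding vec_space.col_space_def by auto
  have eq: "{v \<in> carrier_vec m. \<exists>c\<in>carrier_vec N. H *\<^sub>v c = v} = {v \<in> carrier_vec m. \<exists>c\<in>carrier_vec N. W *\<^sub>v c = v}"
    using sp unfolding sW sH .
  have e: "(\<exists>c\<in>carrier_vec N. H *\<^sub>v c = v) \<longleftrightarrow> (\<exists>c\<in>carrier_vec N. W *\<^sub>v c = v)" for v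
  proof
    assume "\<exists>c\<in>carrier_vec N. H *\<^sub>v c = v"
    then obtain c where c: "c \<in> carrier_vec N" "H *\<^sub>v c = v" by blast
    then have "v \<in> carrier_vec m" using Hc by auto
    then have "v \<in> {v \<in> carrier_vec m. \<exists>c\<in>carrier_vec N. H *\<^sub>v c = v}" using c by blast
    then show "\<exists>c\<in>carrier_vec N. W *\<^sub>v c = v" unfolding eq by blast
  next
    assume "\<exists>c\<in>carrier_vec N. W *\<^sub>v c = v"
    then obtain c where c: "c \<in> carrier_vec N" "W *\<^sub>v c = v" by blast
    then have "v \<in> carrier_vec m" using Wc by auto
    then have "v \<in> {v \<in> carrier_vec m. \<exists>c\<in>carrier_vec N. W *\<^sub>v c = v}" using c by blast
    then show "\<exists>c\<in>carrier_vec N. H *\<^sub>v c = v" unfolding eq[symmetric] by blast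
  qed
  show ?thesis unfolding Bd
  proof (intro equalityI subsetI)
    fix a assume "a \<in> {W *\<^sub>v c + w0 |c. c \<in> carrier_vec N}"
    then obtain c where c: "c \<in> carrier_vec N" "a = W *\<^sub>v c + w0" by blast
    have "\<exists>c'\<in>carrier_vec N. W *\<^sub>v c' = W *\<^sub>v c" using c(1) by blast
    then obtain l where l: "l \<in> carrier_vec N" "H *\<^sub>v l = W *\<^sub>v c" unfolding e[symmetric] by blast
    have "a = H *\<^sub>v l + w0" using c(2) l(2) by simp
    then show "a \<in> {H *\<^sub>v l + w0 |l. l \<in> carrier_vec N}" using l(1) by blast
  next
    fix a assume "a \<in> {H *\<^sub>v c + w0 |c. c \<in> carrier_vec N}"
    then obtain c where c: "c \<in> carrier_vec N" "a = H *\<^sub>v c + w0" by blast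
    have "\<exists>c'\<in>carrier_vec N. H *\<^sub>v c' = H *\<^sub>v c" using c(1) by blast
    then obtain l where l: "l \<in> carrier_vec N" "W *\<^sub>v l = H *\<^sub>v c" unfolding e by blast
    have "a = W *\<^sub>v l + w0" using c(2) l(2) by simp
    then show "a \<in> {W *\<^sub>v l + w0 |l. l \<in> carrier_vec N}" using l(1) by blast
  qed
qed

theorem lemma2:
  fixes nu ny T nx1 nx2 :: nat
    and A1 B1 C1 D1 A2 B2 C2 D2 :: "nat \<Rightarrow> real mat"
    and x10 x20 :: "real vec"
    and u1 y1 u2 y2 :: "nat \<Rightarrow> real vec"
    and H1 H2 :: "real mat"
  defines "w1 \<equiv> \<lambda>k. u1 k @\<^sub>v y1 k"
    and "w2 \<equiv> \<lambda>k. u2 k @\<^sub>v y2 k"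
    and "\<BB>1 \<equiv> behavior nx1 nu ny T A1 B1 C1 D1 x10"
    and "\<BB>2 \<equiv> behavior nx2 nu ny T A2 B2 C2 D2 x20"
  assumes sys1: "well_dim_sys nx1 nu ny T A1 B1 C1 D1 x10"
    and sys2: "well_dim_sys nx2 nu ny T A2 B2 C2 D2 x20"
    and u1_dim: "\<forall>k\<le>nu * T. u1 k \<in> carrier_vec (nu * T)"
    and u2_dim: "\<forall>k\<le>nu * T. u2 k \<in> carrier_vec (nu * T)"
    and y1_dim: "\<forall>k\<le>nu * T. y1 k \<in> carrier_vec (ny * T)"
    and y2_dim: "\<forall>k\<le>nu * T. y2 k \<in> carrier_vec (ny * T)"
    and y1_out: "\<forall>k\<le>nu * T. w1 k \<in> \<BB>1"
    and y2_out: "\<forall>k\<le>nu * T. w2 k \<in> \<BB>2"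
    and u10: "u1 0 = 0\<^sub>v (nu * T)"
    and u20: "u2 0 = 0\<^sub>v (nu * T)"
    and rank1: "vec_space.rank (nu * T) (mat_of_cols (nu * T) (map u1 [1..<nu * T + 1])) = nu * T"
    and rank2: "vec_space.rank (nu * T) (mat_of_cols (nu * T) (map u2 [1..<nu * T + 1])) = nu * T"
    and H1_dim: "H1 \<in> carrier_mat ((nu + ny) * T) (nu * T)"
    and H2_dim: "H2 \<in> carrier_mat ((nu + ny) * T) (nu * T)"
    and H1_onb: "onb_of_span ((nu + ny) * T) H1 (diff_mat ((nu + ny) * T) (nu * T) w1)"
    and H2_onb: "onb_of_span ((nu + ny) * T) H2 (diff_mat ((nu + ny) * T) (nu * T) w2)"
  shows "(\<BB>1 \<inter> \<BB>2 \<noteq> {} \<longleftrightarrow>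
           (\<exists>l1 \<in> carrier_vec (nu * T). \<exists>l2 \<in> carrier_vec (nu * T).
              H1 *\<^sub>v l1 + H2 *\<^sub>v l2 = w2 0 - w1 0))
       \<and> \<BB>1 \<inter> \<BB>2 =
           {H1 *\<^sub>v l1 + w1 0 | l1 l2. l1 \<in> carrier_vec (nu * T) \<and> l2 \<in> carrier_vec (nu * T) \<and>
              H1 *\<^sub>v l1 + H2 *\<^sub>v l2 = w2 0 - w1 0}"
proof -
  define N where "N = nu * T"
  define m where "m = (nu + ny) * T"
  have mN: "m = N + ny * T" unfolding m_def N_def by (simp add: algebra_simps)
  have W1c: "diff_mat m N w1 \<in> carrier_mat m N" unfolding diff_mat_def by auto
  have W2c: "diff_mat m N w2 \<in> carrier_mat m N" unfolding diff_mat_def by auto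
  have c1: "\<BB>1 = {diff_mat m N w1 *\<^sub>v c + w1 0 | c. c \<in> carrier_vec N}"
  proof -
    have o: "\<forall>k\<le>nu * T. u1 k @\<^sub>v y1 k \<in> behavior nx1 nu ny T A1 B1 C1 D1 x10"
      using y1_out unfolding w1_def \<BB>1_def .
    show ?thesis unfolding \<BB>1_def w1_def m_def N_def
      by (rule beh_char[OF sys1 u1_dim y1_dim o u10 rank1])
  qed
  have c2: "\<BB>2 = {diff_mat m N w2 *\<^sub>v c + w2 0 | c. c \<in> carrier_vec N}"
  proof -
    have o: "\<forall>k\<le>nu * T. u2 k @\<^sub>v y2 k \<in> behavior nx2 nu ny T A2 B2 C2 D2 x20"
      using y2_out unfolding w2_def \<BB>2_def .
    show ?thesis unfolding \<BB>2_def w2_def m_def N_def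
      by (rule beh_char[OF sys2 u2_dim y2_dim o u20 rank2])
  qed
  have H1c: "H1 \<in> carrier_mat m N" and H2c: "H2 \<in> carrier_mat m N"
    using H1_dim H2_dim unfolding m_def N_def by auto
  have B1: "\<BB>1 = {H1 *\<^sub>v l + w1 0 | l. l \<in> carrier_vec N}"
    by (rule beh_H[OF c1 W1c H1c]) (use H1_onb in \<open>simp add: onb_of_span_def m_def N_def\<close>)
  have B2: "\<BB>2 = {H2 *\<^sub>v l + w2 0 | l. l \<in> carrier_vec N}"
    by (rule beh_H[OF c2 W2c H2c]) (use H2_onb in \<open>simp add: onb_of_span_def m_def N_def\<close>)
  have w10: "w1 0 \<in> carrier_vec m" and w20: "w2 0 \<in> carrier_vec m"
    unfolding w1_def w2_def mN N_def using u1_dim y1_dim u2_dim y2_dim by auto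
  have neg: "H *\<^sub>v ((-1) \<cdot>\<^sub>v l) = (-1) \<cdot>\<^sub>v (H *\<^sub>v l)" if "H \<in> carrier_mat m N" "l \<in> carrier_vec N"
    for H :: "real mat" and l
    using mult_mat_vec[OF that] .
  have inter: "\<BB>1 \<inter> \<BB>2 =
           {H1 *\<^sub>v l1 + w1 0 | l1 l2. l1 \<in> carrier_vec N \<and> l2 \<in> carrier_vec N \<and>
              H1 *\<^sub>v l1 + H2 *\<^sub>v l2 = w2 0 - w1 0}"
  proof (intro equalityI subsetI)
    fix z assume "z \<in> \<BB>1 \<inter> \<BB>2"
    then obtain l1 l2' where l: "l1 \<in> carrier_vec N" "l2' \<in> carrier_vec N"
      "z = H1 *\<^sub>v l1 + w1 0" "z = H2 *\<^sub>v l2' + w2 0"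
      unfolding B1 B2 by blast
    define l2 where "l2 = (-1) \<cdot>\<^sub>v l2'"
    have l2c: "l2 \<in> carrier_vec N" unfolding l2_def using l by simp
    have "H1 *\<^sub>v l1 + H2 *\<^sub>v l2 = w2 0 - w1 0"
    proof (rule eq_vecI)
      fix i assume "i < dim_vec (w2 0 - w1 0)"
      then have i: "i < m" using w10 w20 by simp
      have "z $ i = (H1 *\<^sub>v l1) $ i + w1 0 $ i" using l(3) i w10 H1c by simp
      moreover have "z $ i = (H2 *\<^sub>v l2') $ i + w2 0 $ i" using l(4) i w20 H2c by simp
      moreover have "(H2 *\<^sub>v l2) $ i = - (H2 *\<^sub>v l2') $ i"
        unfolding l2_def neg[OF H2c l(2)] using i H2c by simp
      ultimately show "(H1 *\<^sub>v l1 + H2 *\<^sub>v l2) $ i = (w2 0 - w1 0) $ i"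
        using i H1c H2c w10 w20 by simp
    qed (use H1c H2c w10 w20 in simp)
    then show "z \<in> {H1 *\<^sub>v l1 + w1 0 | l1 l2. l1 \<in> carrier_vec N \<and> l2 \<in> carrier_vec N \<and>
              H1 *\<^sub>v l1 + H2 *\<^sub>v l2 = w2 0 - w1 0}" using l l2c by blast
  next
    fix z assume "z \<in> {H1 *\<^sub>v l1 + w1 0 | l1 l2. l1 \<in> carrier_vec N \<and> l2 \<in> carrier_vec N \<and>
              H1 *\<^sub>v l1 + H2 *\<^sub>v l2 = w2 0 - w1 0}"
    then obtain l1 l2 where l: "l1 \<in> carrier_vec N" "l2 \<in> carrier_vec N" "z = H1 *\<^sub>v l1 + w1 0"
      "H1 *\<^sub>v l1 + H2 *\<^sub>v l2 = w2 0 - w1 0" by blast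
    have z1: "z \<in> \<BB>1" unfolding B1 using l by blast
    have "z = H2 *\<^sub>v ((-1) \<cdot>\<^sub>v l2) + w2 0"
    proof (rule eq_vecI)
      fix i assume "i < dim_vec (H2 *\<^sub>v ((-1) \<cdot>\<^sub>v l2) + w2 0)"
      then have i: "i < m" using w20 by simp
      have "(H1 *\<^sub>v l1 + H2 *\<^sub>v l2) $ i = (w2 0 - w1 0) $ i" using l(4) by simp
      then have e: "(H1 *\<^sub>v l1) $ i + (H2 *\<^sub>v l2) $ i = w2 0 $ i - w1 0 $ i"
        using i H1c H2c w10 w20 by simp
      have "(H2 *\<^sub>v ((-1) \<cdot>\<^sub>v l2)) $ i = - (H2 *\<^sub>v l2) $ i"
        unfolding neg[OF H2c l(2)] using i H2c by simp
      then show "z $ i = (H2 *\<^sub>v ((-1) \<cdot>\<^sub>v l2) + w2 0) $ i"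
        using e l(3) i H1c H2c w10 w20 by simp
    qed (use l(3) H1c H2c w10 w20 in simp)
    moreover have "(-1) \<cdot>\<^sub>v l2 \<in> carrier_vec N" using l by simp
    ultimately have "z \<in> \<BB>2" unfolding B2 by blast
    then show "z \<in> \<BB>1 \<inter> \<BB>2" using z1 by blast
  qed
  moreover have "(\<BB>1 \<inter> \<BB>2 \<noteq> {}) = (\<exists>l1 \<in> carrier_vec N. \<exists>l2 \<in> carrier_vec N.
              H1 *\<^sub>v l1 + H2 *\<^sub>v l2 = w2 0 - w1 0)"
    unfolding inter by blast
  ultimately show ?thesis unfolding N_def by (intro conjI)
qed

end
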